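(* There is a universal constant $C>0$ such that for all $q>2$, integers $n,p\ge1$, and $\sigma,B>0$ with $(B^2/\sigma^2)^{q/(q-2)}\,(\ln(2p)/n)>e$, \[ \mathcal{E}_q(\sigma,B)\le C\,B\Big(\frac{\ln(2p)}n\Big)^{1-1/q}\Big[\ln\Big(\frac{B^2}{\sigma^2}\Big(\frac{\ln(2p)}n\Big)^{1-2/q}\Big)\Big]^{1/q-1}. \]
   Context: For independent mean-zero random vectors $\boldsymbol{X}_1,\dots,\boldsymbol{X}_n$ in $\mathbb{R}^p$ with joint law $P^n$, set $\mathcal{V}(P^n)=\max_{1\le j\le p}\frac1n\sum_{i=1}^n\mathbb{E}[X_i(j)^2]$ and $\mathcal{D}_q(P^n)=(\frac1n\sum_{i=1}^n\mathbb{E}[\max_{1\le j\le p}|X_i(j)|^q])^{1/q}$. $\mathcal{E}_q(\sigma,B)$ is the supremum of $\mathbb{E}[\max_{1\le j\le p}|\frac1n\sum_{i=1}^nX_i(j)|]$ over all such laws with $\mathcal{V}(P^n)\le\sigma^2$ and $\mathcal{D}_q(P^n)\le B$. The constant $C$ does not depend on $n,p,q,\sigma,B$. *)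

theory Defs
  imports "HOL-Probability.Probability"
begin

text \<open>The joint law P^n of the random vectors X_1,...,X_n in R^p is represented canonically
  as a probability measure M on the sample space nat => nat => real, where the
  coordinate omega i j plays the role of X_(i+1)(j+1) (i < n, j < p).  Indices are 0-based.\<close>

definition admissible_law :: "nat \<Rightarrow> nat \<Rightarrow> (nat \<Rightarrow> nat \<Rightarrow> real) measure \<Rightarrow> bool" where
  "admissible_law n p M \<longleftrightarrow>
     prob_space M \<and>
     (\<forall>i<n. \<forall>j<p. (\<lambda>\<omega>. \<omega> i j) \<in> borel_measurable M \<and>
                    integrable M (\<lambda>\<omega>. \<omega> i j) \<and> (\<integral>\<omega>. \<omega> i j \<partial>M) = 0) \<and>
     prob_space.indep_vars M (\<lambda>_. PiM {..<p} (\<lambda>_. borel))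
        (\<lambda>i \<omega>. restrict (\<omega> i) {..<p}) {..<n}"

definition law_V :: "nat \<Rightarrow> nat \<Rightarrow> (nat \<Rightarrow> nat \<Rightarrow> real) measure \<Rightarrow> ennreal" where
  "law_V n p M = (MAX j\<in>{..<p}. (\<Sum>i<n. \<integral>\<^sup>+\<omega>. ennreal ((\<omega> i j)\<^sup>2) \<partial>M) / of_nat n)"

definition law_Dq_pow :: "real \<Rightarrow> nat \<Rightarrow> nat \<Rightarrow> (nat \<Rightarrow> nat \<Rightarrow> real) measure \<Rightarrow> ennreal" where
  "law_Dq_pow q n p M =
     (\<Sum>i<n. \<integral>\<^sup>+\<omega>. ennreal ((MAX j\<in>{..<p}. \<bar>\<omega> i j\<bar>) powr q) \<partial>M) / of_nat n"

definition Dq_le :: "real \<Rightarrow> nat \<Rightarrow> nat \<Rightarrow> (nat \<Rightarrow> nat \<Rightarrow> real) measure \<Rightarrow> real \<Rightarrow> bool" where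
  "Dq_le q n p M B \<longleftrightarrow> law_Dq_pow q n p M < \<infinity> \<and> enn2real (law_Dq_pow q n p M) powr (1 / q) \<le> B"

definition max_mean_dev :: "nat \<Rightarrow> nat \<Rightarrow> (nat \<Rightarrow> nat \<Rightarrow> real) measure \<Rightarrow> ennreal" where
  "max_mean_dev n p M = (\<integral>\<^sup>+\<omega>. ennreal (MAX j\<in>{..<p}. \<bar>(\<Sum>i<n. \<omega> i j) / real n\<bar>) \<partial>M)"

definition Eq :: "real \<Rightarrow> nat \<Rightarrow> nat \<Rightarrow> real \<Rightarrow> real \<Rightarrow> ennreal" where
  "Eq q n p \<sigma> B = (SUP M \<in> {M. admissible_law n p M \<and> law_V n p M \<le> ennreal (\<sigma>\<^sup>2) \<and> Dq_le q n p M B}.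
                      max_mean_dev n p M)"

end

theory Submission
  imports Defs
begin

lemma tail_bound:
  fixes x t y q :: real
  assumes "t > 0" "x > t" "\<bar>y\<bar> \<le> x" "q \<ge> 1"
  shows "\<bar>y\<bar> \<le> x powr q / t powr (q-1)"
proof -
  have "t powr (q-1) \<le> x powr (q-1)" using assms by (intro powr_mono2) auto
  hence "x * t powr (q-1) \<le> x * x powr (q-1)" using assms by (intro mult_left_mono) auto
  also have "x * x powr (q-1) = x powr q" using assms by (simp add: powr_diff)
  finally have "x \<le> x powr q / t powr (q-1)" using assms by (simp add: field_simps)
  thus ?thesis using assms by linarith
qed

lemma max_meas_pi:
  fixes p :: nat
  shows "(\<lambda>x. MAX k\<in>{..<p}. \<bar>x k :: real\<bar>) \<in> borel_measurable (PiM {..<p} (\<lambda>_. borel))"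
proof (rule borel_measurable_Max)
  fix k assume "k \<in> {..<p}"
  hence "(\<lambda>x. x k) \<in> measurable (PiM {..<p} (\<lambda>_. borel)) borel"
    by (rule measurable_component_singleton)
  thus "(\<lambda>x. \<bar>x k :: real\<bar>) \<in> borel_measurable (PiM {..<p} (\<lambda>_. borel))" by measurable
qed simp

lemma hY_meas:
  fixes p :: nat and j :: nat and \<tau> c :: real
  assumes "j < p"
  shows "(\<lambda>x. (if (MAX k\<in>{..<p}. \<bar>x k :: real\<bar>) \<le> \<tau> then x j else 0) - c) \<in> borel_measurable (PiM {..<p} (\<lambda>_. borel))"
proof -
  have [measurable]: "(\<lambda>x. x j) \<in> measurable (PiM {..<p} (\<lambda>_. borel)) borel"
    using assms by (intro measurable_component_singleton) simp
  have [measurable]: "(\<lambda>x. MAX k\<in>{..<p}. \<bar>x k :: real\<bar>) \<in> borel_measurable (PiM {..<p} (\<lambda>_. borel))"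
    by (rule max_meas_pi)
  show ?thesis by measurable
qed

lemma exp_quad_bound:
  fixes y b :: real assumes "\<bar>y\<bar> \<le> b"
  shows "exp y \<le> 1 + y + y\<^sup>2 * exp b / 2"
proof -
  obtain t where t: "\<bar>t\<bar> \<le> \<bar>y\<bar>" "exp y = (\<Sum>m<2. (y ^ m) / fact m) + (exp t / fact 2) * y ^ 2"
    using Maclaurin_exp_le[of y 2] by blast
  have "exp t \<le> exp b" using t(1) assms by simp
  hence "(exp t / fact 2) * y ^ 2 \<le> (exp b / 2) * y^2"
    by (intro mult_right_mono) (auto simp: fact_numeral)
  moreover have "(\<Sum>m<2. (y ^ m) / fact m) = 1 + y" by (simp add: numeral_2_eq_2)
  ultimately show ?thesis using t(2) by (simp add: algebra_simps)
qed

lemma (in prob_space) mgf_single: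
  fixes Y :: "'a \<Rightarrow> real"
  assumes meas: "Y \<in> borel_measurable M" and bd: "\<And>\<omega>. \<bar>Y \<omega>\<bar> \<le> a"
    and lam: "lam \<ge> 0" and s: "\<bar>s\<bar> = 1" and m0: "(\<integral>\<omega>. Y \<omega> \<partial>M) = 0"
  shows "integrable M (\<lambda>\<omega>. exp (s*lam*Y \<omega>))"
    and "(\<integral>\<omega>. exp (s*lam*Y \<omega>) \<partial>M) \<le> exp (lam\<^sup>2 * exp (lam*a) / 2 * (\<integral>\<omega>. (Y \<omega>)\<^sup>2 \<partial>M))"
proof -
  have [measurable]: "Y \<in> borel_measurable M" by fact
  have a0: "a \<ge> 0" using bd[of undefined] by linarith
  have iY: "integrable M Y" by (rule integrable_const_bound[where B=a]) (auto simp: bd)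
  have iY2: "integrable M (\<lambda>\<omega>. (Y \<omega>)\<^sup>2)"
  proof (rule integrable_const_bound[where B="a\<^sup>2"])
    show "AE x in M. norm ((Y x)\<^sup>2) \<le> a\<^sup>2"
    proof (rule AE_I2)
      fix x have "\<bar>Y x\<bar> \<le> \<bar>a\<bar>" using bd[of x] by simp
      thus "norm ((Y x)\<^sup>2) \<le> a\<^sup>2" by (simp add: abs_le_square_iff)
    qed
  qed simp
  have pt: "exp (s*lam*Y \<omega>) \<le> 1 + s*lam*Y \<omega> + lam\<^sup>2 * exp (lam*a) / 2 * (Y \<omega>)\<^sup>2" for \<omega>
  proof -
    have "\<bar>s*lam*Y \<omega>\<bar> = lam * \<bar>Y \<omega>\<bar>" using s lam by (simp add: abs_mult)
    also have "\<dots> \<le> lam * a" using bd lam by (intro mult_left_mono) auto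
    finally have "exp (s*lam*Y \<omega>) \<le> 1 + s*lam*Y \<omega> + (s*lam*Y \<omega>)\<^sup>2 * exp (lam*a) / 2"
      by (rule exp_quad_bound)
    moreover have "(s*lam*Y \<omega>)\<^sup>2 * exp (lam*a) / 2 = lam\<^sup>2 * exp (lam*a) / 2 * (Y \<omega>)\<^sup>2"
    proof -
      have "s\<^sup>2 = \<bar>s\<bar>\<^sup>2" by simp
      hence "s\<^sup>2 = 1" using s by simp
      thus ?thesis by (simp add: power_mult_distrib)
    qed
    ultimately show ?thesis by linarith
  qed
  show ie: "integrable M (\<lambda>\<omega>. exp (s*lam*Y \<omega>))"
  proof (rule integrable_const_bound[where B="exp (lam*a)"])
    show "AE x in M. norm (exp (s*lam*Y x)) \<le> exp (lam*a)"
    proof (rule AE_I2)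
      fix x
      have "s*lam*Y x \<le> \<bar>s*lam*Y x\<bar>" by simp
      also have "\<bar>s*lam*Y x\<bar> = lam * \<bar>Y x\<bar>" using s lam by (simp add: abs_mult)
      also have "\<dots> \<le> lam * a" using bd lam by (intro mult_left_mono) auto
      finally show "norm (exp (s*lam*Y x)) \<le> exp (lam*a)" by simp
    qed
  qed simp
  have "(\<integral>\<omega>. exp (s*lam*Y \<omega>) \<partial>M) \<le> (\<integral>\<omega>. 1 + s*lam*Y \<omega> + lam\<^sup>2 * exp (lam*a) / 2 * (Y \<omega>)\<^sup>2 \<partial>M)"
    using ie iY iY2 pt by (intro integral_mono) auto
  also have "\<dots> = 1 + s*lam*(\<integral>\<omega>. Y \<omega> \<partial>M) + lam\<^sup>2 * exp (lam*a) / 2 * (\<integral>\<omega>. (Y \<omega>)\<^sup>2 \<partial>M)"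
    using iY iY2 prob_space by simp
  also have "\<dots> \<le> exp (lam\<^sup>2 * exp (lam*a) / 2 * (\<integral>\<omega>. (Y \<omega>)\<^sup>2 \<partial>M))"
    using m0 exp_ge_add_one_self by simp
  finally show "(\<integral>\<omega>. exp (s*lam*Y \<omega>) \<partial>M) \<le> exp (lam\<^sup>2 * exp (lam*a) / 2 * (\<integral>\<omega>. (Y \<omega>)\<^sup>2 \<partial>M))" .
qed

lemma core:
  fixes n p :: nat and q \<tau> lam V D :: real and M :: "(nat \<Rightarrow> nat \<Rightarrow> real) measure"
  assumes PS: "prob_space M" and n: "n \<ge> 1" and p: "p \<ge> 1" and q: "q \<ge> 1" and tau: "\<tau> > 0" and lam: "lam > 0"
  and meas: "\<And>i j. i<n \<Longrightarrow> j<p \<Longrightarrow> (\<lambda>\<omega>. \<omega> i j) \<in> borel_measurable M"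
  and int: "\<And>i j. i<n \<Longrightarrow> j<p \<Longrightarrow> integrable M (\<lambda>\<omega>. \<omega> i j)"
  and mean0: "\<And>i j. i<n \<Longrightarrow> j<p \<Longrightarrow> (\<integral>\<omega>. \<omega> i j \<partial>M) = 0"
  and ind: "prob_space.indep_vars M (\<lambda>_. PiM {..<p} (\<lambda>_. borel)) (\<lambda>i \<omega>. restrict (\<omega> i) {..<p}) {..<n}"
  and sqint: "\<And>i j. i<n \<Longrightarrow> j<p \<Longrightarrow> integrable M (\<lambda>\<omega>. (\<omega> i j)\<^sup>2)"
  and Vb: "\<And>j. j<p \<Longrightarrow> (\<Sum>i<n. \<integral>\<omega>. (\<omega> i j)\<^sup>2 \<partial>M) \<le> V"
  and qint: "\<And>i. i<n \<Longrightarrow> integrable M (\<lambda>\<omega>. (MAX j\<in>{..<p}. \<bar>\<omega> i j\<bar>) powr q)"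
  and Db: "(\<Sum>i<n. \<integral>\<omega>. (MAX j\<in>{..<p}. \<bar>\<omega> i j\<bar>) powr q \<partial>M) \<le> D"
  shows "(\<integral>\<^sup>+\<omega>. ennreal (MAX j\<in>{..<p}. \<bar>(\<Sum>i<n. \<omega> i j) / real n\<bar>) \<partial>M)
     \<le> ennreal ((ln (2*real p)/lam + lam * exp (2*lam*\<tau>) * V / 2 + 2 * D / \<tau> powr (q-1)) / real n)"
proof -
  interpret prob_space M by (rule PS)
  define Mx where "Mx i \<omega> = (MAX j\<in>{..<p}. \<bar>\<omega> i j\<bar>)" for i and \<omega> :: "nat \<Rightarrow> nat \<Rightarrow> real"
  have Mx_meas[measurable]: "Mx i \<in> borel_measurable M" if "i<n" for i
    unfolding Mx_def using meas that by (intro borel_measurable_Max) auto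
  have Mx_ge: "\<bar>\<omega> i j\<bar> \<le> Mx i \<omega>" if "j<p" for i j \<omega>
    unfolding Mx_def using that by (intro Max_ge) auto
  define Z where "Z i j \<omega> = (if Mx i \<omega> \<le> \<tau> then \<omega> i j else 0)" for i j and \<omega> :: "nat \<Rightarrow> nat \<Rightarrow> real"
  define mu where "mu i j = (\<integral>\<omega>. Z i j \<omega> \<partial>M)" for i j
  define Y where "Y i j \<omega> = Z i j \<omega> - mu i j" for i j \<omega>
  have Z_meas[measurable]: "Z i j \<in> borel_measurable M" if "i<n" "j<p" for i j
  proof -
    have [measurable]: "(\<lambda>\<omega>. \<omega> i j) \<in> borel_measurable M" using meas that by auto
    have [measurable]: "Mx i \<in> borel_measurable M" using that(1) by (rule Mx_meas)
    show ?thesis unfolding Z_def by measurable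
  qed
  have Z_bd: "\<bar>Z i j \<omega>\<bar> \<le> \<tau>" if "j<p" for i j \<omega>
    using Mx_ge[OF that, of \<omega> i] tau by (auto simp: Z_def)
  have Z_int: "integrable M (Z i j)" if "i<n" "j<p" for i j
    by (rule integrable_const_bound[where B=\<tau>]) (use Z_bd that in auto)
  have mu_bd: "\<bar>mu i j\<bar> \<le> \<tau>" if "i<n" "j<p" for i j
  proof -
    have "\<bar>mu i j\<bar> \<le> (\<integral>\<omega>. \<bar>Z i j \<omega>\<bar> \<partial>M)" unfolding mu_def
      using integral_norm_bound[of M "Z i j"] by simp
    also have "\<dots> \<le> (\<integral>\<omega>. \<tau> \<partial>M)"
      using Z_int[OF that] Z_bd[OF that(2)] by (intro integral_mono) auto
    finally show ?thesis using prob_space by simp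
  qed
  have Y_meas[measurable]: "Y i j \<in> borel_measurable M" if "i<n" "j<p" for i j
    unfolding Y_def using Z_meas[OF that] by measurable
  have Y_bd: "\<bar>Y i j \<omega>\<bar> \<le> 2*\<tau>" if "i<n" "j<p" for i j \<omega>
    using Z_bd[OF that(2), of i \<omega>] mu_bd[OF that] unfolding Y_def by linarith
  have Y_mean: "(\<integral>\<omega>. Y i j \<omega> \<partial>M) = 0" if "i<n" "j<p" for i j
    unfolding Y_def mu_def using Z_int[OF that] prob_space by simp
  have Z2_le: "(Z i j \<omega>)\<^sup>2 \<le> (\<omega> i j)\<^sup>2" for i j \<omega> by (simp add: Z_def)
  have Z2_int: "integrable M (\<lambda>\<omega>. (Z i j \<omega>)\<^sup>2)" if "i<n" "j<p" for i j
  proof (rule Bochner_Integration.integrable_bound[OF sqint[OF that]])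
    show "(\<lambda>\<omega>. (Z i j \<omega>)\<^sup>2) \<in> borel_measurable M" using Z_meas[OF that] by measurable
    show "AE x in M. norm ((Z i j x)\<^sup>2) \<le> norm ((x i j)\<^sup>2)" using Z2_le by simp
  qed
  have Y_sq: "(\<integral>\<omega>. (Y i j \<omega>)\<^sup>2 \<partial>M) \<le> (\<integral>\<omega>. (\<omega> i j)\<^sup>2 \<partial>M)" if "i<n" "j<p" for i j
  proof -
    have "(\<integral>\<omega>. (Y i j \<omega>)\<^sup>2 \<partial>M) = (\<integral>\<omega>. (Z i j \<omega>)\<^sup>2 + (mu i j)\<^sup>2 - 2 * mu i j * Z i j \<omega> \<partial>M)"
      unfolding Y_def by (intro Bochner_Integration.integral_cong) (auto simp: power2_diff)
    also have "\<dots> = (\<integral>\<omega>. (Z i j \<omega>)\<^sup>2 \<partial>M) + (mu i j)\<^sup>2 - 2 * mu i j * mu i j"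
      using Z_int[OF that] Z2_int[OF that] prob_space by (simp add: mu_def)
    also have "\<dots> \<le> (\<integral>\<omega>. (Z i j \<omega>)\<^sup>2 \<partial>M)" by (simp add: power2_eq_square)
    also have "\<dots> \<le> (\<integral>\<omega>. (\<omega> i j)\<^sup>2 \<partial>M)"
      using Z2_int[OF that] sqint[OF that] Z2_le by (intro integral_mono) auto
    finally show ?thesis .
  qed
  define c where "c = lam\<^sup>2 * exp (lam*(2*\<tau>)) / 2"
  have c0: "c \<ge> 0" by (simp add: c_def)
  define SY where "SY j \<omega> = (\<Sum>i<n. Y i j \<omega>)" for j \<omega>
  have mgf: "integrable M (\<lambda>\<omega>. exp (s*lam*SY j \<omega>)) \<and> (\<integral>\<omega>. exp (s*lam*SY j \<omega>) \<partial>M) \<le> exp (c*V)"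
    if jp: "j<p" and s1: "\<bar>s\<bar> = 1" for j s
  proof -
    define hY where "hY i x = (if (MAX k\<in>{..<p}. \<bar>x k :: real\<bar>) \<le> \<tau> then x j else 0) - mu i j" for i x
    have hY_eq: "Y i j \<omega> = hY i (restrict (\<omega> i) {..<p})" for i \<omega>
    proof -
      have "(MAX k\<in>{..<p}. \<bar>restrict (\<omega> i) {..<p} k\<bar>) = Mx i \<omega>" unfolding Mx_def
        by (intro arg_cong[where f=Max] image_cong) auto
      thus ?thesis using jp by (simp add: hY_def Y_def Z_def)
    qed
    have hm: "(\<lambda>x. exp (s*lam*hY i x)) \<in> borel_measurable (PiM {..<p} (\<lambda>_. borel))" for i
    proof -
      have [measurable]: "hY i \<in> borel_measurable (PiM {..<p} (\<lambda>_. borel))"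
        unfolding hY_def by (rule hY_meas[OF jp])
      show ?thesis by measurable
    qed
    have "indep_vars (\<lambda>_. borel) (\<lambda>i \<omega>. exp (s*lam*hY i (restrict (\<omega> i) {..<p}))) {..<n}"
      by (rule indep_vars_compose2[OF ind hm])
    hence indY: "indep_vars (\<lambda>_. borel) (\<lambda>i \<omega>. exp (s*lam*Y i j \<omega>)) {..<n}"
      by (simp add: hY_eq)
    have iE: "integrable M (\<lambda>\<omega>. exp (s*lam*Y i j \<omega>))"
      and bE: "(\<integral>\<omega>. exp (s*lam*Y i j \<omega>) \<partial>M) \<le> exp (c * (\<integral>\<omega>. (Y i j \<omega>)\<^sup>2 \<partial>M))" if "i<n" for i
      using mgf_single[OF Y_meas[OF that jp] Y_bd[OF that jp] _ s1 Y_mean[OF that jp], of lam] lam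
      by (auto simp: c_def)
    have prodeq: "exp (s*lam*SY j \<omega>) = (\<Prod>i<n. exp (s*lam*Y i j \<omega>))" for \<omega>
      by (simp add: SY_def sum_distrib_left exp_sum)
    have I1: "integrable M (\<lambda>\<omega>. \<Prod>i<n. exp (s*lam*Y i j \<omega>))"
      by (rule indep_vars_integrable[where X="\<lambda>i \<omega>. exp (s*lam*Y i j \<omega>)"]) (auto intro: indY iE)
    have "(\<integral>\<omega>. (\<Prod>i<n. exp (s*lam*Y i j \<omega>)) \<partial>M) = (\<Prod>i<n. \<integral>\<omega>. exp (s*lam*Y i j \<omega>) \<partial>M)"
      by (rule indep_vars_lebesgue_integral[where X="\<lambda>i \<omega>. exp (s*lam*Y i j \<omega>)"]) (auto intro: indY iE)
    also have "\<dots> \<le> (\<Prod>i<n. exp (c * (\<integral>\<omega>. (Y i j \<omega>)\<^sup>2 \<partial>M)))"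
      by (intro prod_mono conjI integral_nonneg) (auto intro: bE)
    also have "\<dots> = exp (c * (\<Sum>i<n. \<integral>\<omega>. (Y i j \<omega>)\<^sup>2 \<partial>M))"
      by (simp add: exp_sum sum_distrib_left)
    also have "\<dots> \<le> exp (c * V)"
    proof -
      have "(\<Sum>i<n. \<integral>\<omega>. (Y i j \<omega>)\<^sup>2 \<partial>M) \<le> (\<Sum>i<n. \<integral>\<omega>. (\<omega> i j)\<^sup>2 \<partial>M)"
        using Y_sq jp by (intro sum_mono) auto
      also have "\<dots> \<le> V" using Vb jp by auto
      finally show ?thesis using c0 by (simp add: mult_left_mono)
    qed
    finally show ?thesis using I1 by (simp add: prodeq)
  qed
  have m1: "integrable M (\<lambda>\<omega>. exp (lam*SY j \<omega>)) \<and> (\<integral>\<omega>. exp (lam*SY j \<omega>) \<partial>M) \<le> exp (c*V)" if "j<p" for j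
    using mgf[OF that, of 1] by simp
  have m2: "integrable M (\<lambda>\<omega>. exp (-(lam*SY j \<omega>))) \<and> (\<integral>\<omega>. exp (-(lam*SY j \<omega>)) \<partial>M) \<le> exp (c*V)" if "j<p" for j
    using mgf[OF that, of "-1"] by simp
  define cc where "cc = 2 * real p * exp (c*V)"
  have cc0: "cc > 0" using p by (simp add: cc_def)
  define W where "W \<omega> = (\<Sum>j<p. exp (lam*SY j \<omega>) + exp (-(lam*SY j \<omega>)))" for \<omega>
  have W_int: "integrable M W" unfolding W_def using m1 m2
    by (intro Bochner_Integration.integrable_sum Bochner_Integration.integrable_add) auto
  have W_E: "(\<integral>\<omega>. W \<omega> \<partial>M) \<le> cc"
  proof -
    have "(\<integral>\<omega>. W \<omega> \<partial>M) = (\<Sum>j<p. (\<integral>\<omega>. exp (lam*SY j \<omega>) \<partial>M) + (\<integral>\<omega>. exp (-(lam*SY j \<omega>)) \<partial>M))"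
      unfolding W_def using m1 m2
      by (subst Bochner_Integration.integral_sum) (auto intro!: sum.cong Bochner_Integration.integral_add)
    also have "\<dots> \<le> (\<Sum>j<p. exp (c*V) + exp (c*V))" using m1 m2 by (intro sum_mono add_mono) auto
    also have "\<dots> = cc" by (simp add: cc_def)
    finally show ?thesis .
  qed
  define Q where "Q i = (\<integral>\<omega>. Mx i \<omega> powr q \<partial>M)" for i
  have qint': "integrable M (\<lambda>\<omega>. Mx i \<omega> powr q)" if "i<n" for i
    using qint[OF that] by (simp add: Mx_def)
  define T where "T \<omega> = (\<Sum>i<n. (Mx i \<omega> powr q + Q i) / \<tau> powr (q-1))" for \<omega>
  have T_int: "integrable M T" unfolding T_def using qint'
    by (intro Bochner_Integration.integrable_sum integrable_divide Bochner_Integration.integrable_add) auto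
  have T_E: "(\<integral>\<omega>. T \<omega> \<partial>M) \<le> 2 * D / \<tau> powr (q-1)"
  proof -
    have "(\<integral>\<omega>. T \<omega> \<partial>M) = (\<Sum>i<n. (Q i + Q i) / \<tau> powr (q-1))"
      unfolding T_def using qint' prob_space
      by (subst Bochner_Integration.integral_sum) (auto intro!: sum.cong simp: Q_def)
    also have "\<dots> = 2 * (\<Sum>i<n. Q i) / \<tau> powr (q-1)"
      by (simp add: sum_divide_distrib[symmetric] sum.distrib sum_distrib_left)
    also have "\<dots> \<le> 2 * D / \<tau> powr (q-1)"
      using Db by (intro divide_right_mono) (auto simp: Q_def Mx_def)
    finally show ?thesis .
  qed
  have dif: "\<bar>\<omega> i j - Y i j \<omega>\<bar> \<le> (Mx i \<omega> powr q + Q i) / \<tau> powr (q-1)" if ij: "i<n" "j<p" for i j \<omega>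
  proof -
    have a: "\<bar>\<omega>' i j - Z i j \<omega>'\<bar> \<le> Mx i \<omega>' powr q / \<tau> powr (q-1)" for \<omega>'
    proof (cases "Mx i \<omega>' \<le> \<tau>")
      case True thus ?thesis by (simp add: Z_def)
    next
      case False
      hence "\<bar>\<omega>' i j\<bar> \<le> Mx i \<omega>' powr q / \<tau> powr (q-1)"
        using tail_bound[OF tau _ Mx_ge[OF ij(2)] q] by simp
      thus ?thesis using False by (simp add: Z_def)
    qed
    have b: "\<bar>mu i j\<bar> \<le> Q i / \<tau> powr (q-1)"
    proof -
      have "mu i j = (\<integral>\<omega>. Z i j \<omega> - \<omega> i j \<partial>M)"
        using Z_int[OF ij] int[OF ij] mean0[OF ij] by (simp add: mu_def)
      hence "\<bar>mu i j\<bar> \<le> (\<integral>\<omega>. \<bar>Z i j \<omega> - \<omega> i j\<bar> \<partial>M)"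
        using integral_norm_bound[of M "\<lambda>\<omega>. Z i j \<omega> - \<omega> i j"] by simp
      also have "\<dots> \<le> (\<integral>\<omega>. Mx i \<omega> powr q / \<tau> powr (q-1) \<partial>M)"
        using Z_int[OF ij] int[OF ij] qint'[OF ij(1)] a
        by (intro integral_mono) (auto simp: abs_minus_commute)
      also have "\<dots> = Q i / \<tau> powr (q-1)" by (simp add: Q_def)
      finally show ?thesis .
    qed
    have "\<omega> i j - Y i j \<omega> = (\<omega> i j - Z i j \<omega>) + mu i j" by (simp add: Y_def)
    thus ?thesis using a[of \<omega>] b by (simp add: add_divide_distrib)
  qed
  have Wpos: "W \<omega> \<ge> exp (lam*SY j \<omega>) + exp (-(lam*SY j \<omega>))" if "j<p" for j \<omega>
    unfolding W_def using that by (intro member_le_sum) (auto intro: add_nonneg_nonneg)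
  have SY_bd: "\<bar>SY j \<omega>\<bar> \<le> ln (W \<omega>) / lam" if "j<p" for j \<omega>
  proof -
    have "exp (lam*\<bar>SY j \<omega>\<bar>) \<le> exp (lam*SY j \<omega>) + exp (-(lam*SY j \<omega>))"
      by (cases "SY j \<omega> \<ge> 0") (auto simp: abs_if add_increasing add_increasing2)
    also have "\<dots> \<le> W \<omega>" by (rule Wpos[OF that])
    finally have "lam*\<bar>SY j \<omega>\<bar> \<le> ln (W \<omega>)"
      by (metis exp_gt_zero ln_exp ln_le_cancel_iff order_less_le_trans)
    thus ?thesis using lam by (simp add: field_simps)
  qed
  have lnW: "ln (W \<omega>) \<le> W \<omega> / cc + ln cc - 1" for \<omega>
  proof -
    have e0: "0 < exp (lam*SY 0 \<omega>) + exp (-(lam*SY 0 \<omega>))" by (intro add_pos_pos) auto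
    have "0 < p" using p by simp
    hence W0: "W \<omega> > 0" using Wpos[of 0 \<omega>] e0 by linarith
    have "ln (W \<omega> / cc) \<le> W \<omega> / cc - 1" using W0 cc0 by (intro ln_le_minus_one) simp
    thus ?thesis using W0 cc0 by (simp add: ln_div)
  qed
  define F where "F \<omega> = ((W \<omega> / cc + ln cc - 1) / lam + T \<omega>) / real n" for \<omega>
  have pt: "\<bar>(\<Sum>i<n. \<omega> i j) / real n\<bar> \<le> F \<omega>" if "j<p" for j \<omega>
  proof -
    have eq: "(\<Sum>i<n. \<omega> i j) = SY j \<omega> + (\<Sum>i<n. \<omega> i j - Y i j \<omega>)"
      by (simp add: SY_def sum_subtractf)
    have "\<bar>\<Sum>i<n. \<omega> i j\<bar> \<le> \<bar>SY j \<omega>\<bar> + \<bar>\<Sum>i<n. \<omega> i j - Y i j \<omega>\<bar>"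
      unfolding eq by (rule abs_triangle_ineq)
    also have "\<dots> \<le> \<bar>SY j \<omega>\<bar> + (\<Sum>i<n. \<bar>\<omega> i j - Y i j \<omega>\<bar>)"
      by (rule add_left_mono[OF sum_abs])
    also have "\<dots> \<le> ln (W \<omega>) / lam + T \<omega>"
      unfolding T_def using SY_bd[OF that] dif that by (intro add_mono sum_mono) auto
    also have "\<dots> \<le> (W \<omega> / cc + ln cc - 1) / lam + T \<omega>"
      using lnW[of \<omega>] lam by (simp add: divide_right_mono)
    finally show ?thesis using n by (simp add: F_def abs_divide divide_right_mono)
  qed
  have ptM: "(MAX j\<in>{..<p}. \<bar>(\<Sum>i<n. \<omega> i j) / real n\<bar>) \<le> F \<omega>" for \<omega>
  proof -
    have "0 \<in> {..<p}" using p by simp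
    hence "{..<p} \<noteq> {}" by blast
    thus ?thesis using pt by (subst Max_le_iff) auto
  qed
  have F0: "F \<omega> \<ge> 0" for \<omega> using pt[of 0 \<omega>] p by linarith
  have F_int: "integrable M F" unfolding F_def using W_int T_int by auto
  have F_E: "(\<integral>\<omega>. F \<omega> \<partial>M) = (((\<integral>\<omega>. W \<omega> \<partial>M) / cc + ln cc - 1) / lam + (\<integral>\<omega>. T \<omega> \<partial>M)) / real n"
    unfolding F_def using W_int T_int prob_space by simp
  have lncc: "ln cc = ln (2 * real p) + c * V" using p by (simp add: cc_def ln_mult)
  have "(\<integral>\<^sup>+\<omega>. ennreal (MAX j\<in>{..<p}. \<bar>(\<Sum>i<n. \<omega> i j) / real n\<bar>) \<partial>M) \<le> (\<integral>\<^sup>+\<omega>. ennreal (F \<omega>) \<partial>M)"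
    by (intro nn_integral_mono ennreal_leI ptM)
  also have "\<dots> = ennreal (\<integral>\<omega>. F \<omega> \<partial>M)"
    by (rule nn_integral_eq_integral[OF F_int]) (simp add: F0)
  also have "\<dots> \<le> ennreal ((ln (2*real p)/lam + lam * exp (2*lam*\<tau>) * V / 2 + 2 * D / \<tau> powr (q-1)) / real n)"
  proof (rule ennreal_leI)
    have "((\<integral>\<omega>. W \<omega> \<partial>M) / cc + ln cc - 1) / lam \<le> (1 + ln cc - 1) / lam"
      using W_E cc0 lam by (intro divide_right_mono) auto
    also have "\<dots> = ln (2*real p)/lam + lam * exp (2*lam*\<tau>) * V / 2"
      using lam unfolding lncc c_def by (simp add: field_simps power2_eq_square mult_ac)
    finally show "(\<integral>\<omega>. F \<omega> \<partial>M) \<le> (ln (2*real p)/lam + lam * exp (2*lam*\<tau>) * V / 2 + 2 * D / \<tau> powr (q-1)) / real n"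
      unfolding F_E using T_E n by (intro divide_right_mono) auto
  qed
  finally show ?thesis .
qed

lemma arith_final:
  fixes q L B \<sigma> :: real
  assumes q: "q > 2" and L: "L > 0" and B: "B > 0" and s: "\<sigma> > 0"
  and lpos: "ln ((B\<^sup>2 / \<sigma>\<^sup>2) * L powr (1 - 2/q)) > 0"
  defines "lg \<equiv> ln ((B\<^sup>2 / \<sigma>\<^sup>2) * L powr (1 - 2/q))"
  defines "m \<equiv> max lg 1"
  defines "\<tau> \<equiv> B * L powr (-1/q) * m powr (1/q)"
  defines "lam \<equiv> m / (4*\<tau>)"
  shows "L/lam + lam * exp (2*lam*\<tau>) * \<sigma>\<^sup>2 / 2 + 2 * B powr q / \<tau> powr (q-1)
     \<le> 12 * B * L powr (1 - 1/q) * lg powr (1/q - 1)"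
proof -
  define R where "R = (B\<^sup>2 / \<sigma>\<^sup>2) * L powr (1 - 2/q)"
  have Rpos: "R > 0" using B s L by (simp add: R_def)
  have lR: "lg = ln R" by (simp add: R_def lg_def)
  have l0: "lg > 0" using lpos lg_def by simp
  have m1: "m \<ge> 1" and ml: "m \<ge> lg" by (auto simp: m_def)
  have m0: "m > 0" using m1 by simp
  have Rm: "exp (m - 1) \<le> R"
  proof -
    have "m - 1 \<le> lg" using l0 by (auto simp: m_def)
    hence "exp (m-1) \<le> exp lg" by simp
    also have "exp lg = R" using lR Rpos by simp
    finally show ?thesis .
  qed
  have tau0: "\<tau> > 0" using B L m0 by (simp add: \<tau>_def)
  define U where "U = B * L powr (1 - 1/q) * m powr (1/q - 1)"
  have U0: "U > 0" using B L m0 by (simp add: U_def)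
  have q0: "q > 0" using q by simp
  have tauL: "\<tau> * L / m = U"
  proof -
    have "L powr (-1/q) * L = L powr (1 - 1/q)"
      using L by (simp add: powr_minus_divide powr_diff)
    moreover have "m powr (1/q) / m = m powr (1/q - 1)"
      using m0 by (simp add: powr_diff)
    ultimately show ?thesis unfolding \<tau>_def U_def
      by (metis (no_types, lifting) mult.commute mult.left_commute times_divide_eq_right)
  qed
  have ta: "L/lam = 4 * U"
    using tauL tau0 m0 unfolding lam_def by (simp add: field_simps)
  have tb: "2 * B powr q / \<tau> powr (q-1) = 2 * U"
  proof -
    have "\<tau> powr (q-1) = B powr (q-1) * L powr ((1-q)/q) * m powr ((q-1)/q)"
    proof -
      have e: "- ((q - 1) / q) = (1-q)/q" by (metis minus_diff_eq minus_divide_left)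
      show ?thesis unfolding \<tau>_def using B L m0 q0
        by (simp add: powr_mult powr_powr e)
    qed
    moreover have "B powr q = B * B powr (q-1)" using B by (simp add: powr_diff)
    moreover have "L powr (1 - 1/q) * L powr ((1-q)/q) = 1"
      using L q0 by (simp add: powr_add[symmetric] field_simps)
    moreover have "m powr (1/q - 1) * m powr ((q-1)/q) = 1"
      using m0 q0 by (simp add: powr_add[symmetric] field_simps)
    ultimately show ?thesis unfolding U_def using B L m0
      by (simp add: field_simps)
  qed
  have tc: "lam * exp (2*lam*\<tau>) * \<sigma>\<^sup>2 / 2 \<le> 6 * U"
  proof -
    have e2: "2*lam*\<tau> = m/2" using tau0 by (simp add: lam_def)
    have mm: "m\<^sup>2 \<le> 16 * exp (m/2)"
    proof -
      have "m/4 \<le> exp (m/4)" using exp_ge_add_one_self[of "m/4"] by linarith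
      hence "(m/4)\<^sup>2 \<le> (exp (m/4))\<^sup>2" using m0 by (intro power_mono) auto
      also have "(exp (m/4))\<^sup>2 = exp (m/2)" by (simp add: power2_eq_square exp_add[symmetric])
      finally show ?thesis by (simp add: power_divide)
    qed
    have "m\<^sup>2 * exp (m/2) \<le> 16 * exp (m/2) * exp (m/2)"
      using mm by (intro mult_right_mono) auto
    also have "\<dots> = 16 * exp 1 * exp (m - 1)" by (simp add: exp_add[symmetric])
    also have "\<dots> \<le> 16 * exp 1 * R" using Rm by simp
    also have "\<dots> \<le> 48 * R" using exp_le Rpos by simp
    finally have A: "m\<^sup>2 * exp (m/2) \<le> 48 * R" .
    have mq: "1 \<le> m powr (2/q)" using m1 q0 by (intro ge_one_powr_ge_zero) auto
    have "m\<^sup>2 * exp (m/2) * \<sigma>\<^sup>2 \<le> 48 * (R * m powr (2/q)) * \<sigma>\<^sup>2"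
    proof (intro mult_right_mono)
      have "R * 1 \<le> R * m powr (2/q)" using mq Rpos by (intro mult_left_mono) auto
      thus "m\<^sup>2 * exp (m/2) \<le> 48 * (R * m powr (2/q))" using A by simp
    qed simp
    also have "48 * (R * m powr (2/q)) * \<sigma>\<^sup>2 = 48 * (\<tau> * U * m)"
    proof -
      have "\<tau> * U * m = B\<^sup>2 * (L powr (-1/q) * L powr (1 - 1/q)) * (m powr (1/q) * m powr (1/q - 1) * m)"
        by (simp add: \<tau>_def U_def power2_eq_square)
      also have "L powr (-1/q) * L powr (1 - 1/q) = L powr (1 - 2/q)"
        using L by (simp add: powr_add[symmetric] field_simps)
      also have "m powr (1/q) * m powr (1/q - 1) * m = m powr (2/q)"
        using m0 by (simp add: powr_add[symmetric] powr_diff field_simps)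
      finally have "\<tau> * U * m = R * m powr (2/q) * \<sigma>\<^sup>2" using s by (simp add: R_def field_simps)
      thus ?thesis by simp
    qed
    finally have B2: "m\<^sup>2 * exp (m/2) * \<sigma>\<^sup>2 \<le> 48 * (\<tau> * U * m)" .
    have "lam * exp (2*lam*\<tau>) * \<sigma>\<^sup>2 / 2 = (m\<^sup>2 * exp (m/2) * \<sigma>\<^sup>2) / (8 * \<tau> * m)"
      unfolding e2 using m0 tau0 by (simp add: lam_def power2_eq_square field_simps)
    also have "\<dots> \<le> 48 * (\<tau> * U * m) / (8 * \<tau> * m)"
      using B2 m0 tau0 by (intro divide_right_mono) auto
    also have "\<dots> = 6 * U" using m0 tau0 by simp
    finally show ?thesis .
  qed
  have "U \<le> B * L powr (1 - 1/q) * lg powr (1/q - 1)"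
  proof -
    have "m powr (1/q - 1) \<le> lg powr (1/q - 1)"
      using ml l0 q by (intro powr_mono2') (auto simp: field_simps)
    thus ?thesis unfolding U_def using B L by simp
  qed
  thus ?thesis using ta tb tc by linarith
qed

lemma sum_nn_fin:
  fixes f :: "nat \<Rightarrow> 'a \<Rightarrow> real" and M :: "'a measure" and n :: nat
  assumes n: "n \<ge> 1" and meas: "\<And>i. i<n \<Longrightarrow> f i \<in> borel_measurable M"
    and nn: "\<And>i x. i<n \<Longrightarrow> f i x \<ge> 0"
    and fin: "(\<Sum>i<n. \<integral>\<^sup>+x. ennreal (f i x) \<partial>M) / of_nat n < \<infinity>"
  shows "\<And>i. i<n \<Longrightarrow> integrable M (f i)"
    and "(\<Sum>i<n. \<integral>\<^sup>+x. ennreal (f i x) \<partial>M) / of_nat n = ennreal ((\<Sum>i<n. \<integral>x. f i x \<partial>M) / real n)"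
proof -
  have sfin': "(\<Sum>i<n. \<integral>\<^sup>+x. ennreal (f i x) \<partial>M) \<noteq> \<infinity>"
  proof
    assume inf: "(\<Sum>i<n. \<integral>\<^sup>+x. ennreal (f i x) \<partial>M) = \<infinity>"
    have "(\<Sum>i<n. \<integral>\<^sup>+x. ennreal (f i x) \<partial>M) / of_nat n = \<infinity>"
      unfolding inf using n by (simp add: ennreal_divide_eq_top_iff ennreal_of_nat_eq_real_of_nat)
    thus False using fin by (simp only: less_irrefl)
  qed
  have sfin: "(\<Sum>i<n. \<integral>\<^sup>+x. ennreal (f i x) \<partial>M) < \<infinity>"
    using sfin' unfolding infinity_ennreal_def by (rule less_top[THEN iffD1])
  have ifin: "(\<integral>\<^sup>+x. ennreal (f i x) \<partial>M) < \<infinity>" if "i<n" for i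
  proof -
    have "(\<integral>\<^sup>+x. ennreal (f i x) \<partial>M) \<le> (\<Sum>i<n. \<integral>\<^sup>+x. ennreal (f i x) \<partial>M)"
      using that by (intro member_le_sum) auto
    thus ?thesis using sfin by (rule le_less_trans)
  qed
  show int: "integrable M (f i)" if "i<n" for i
  proof (rule integrableI_bounded)
    show "f i \<in> borel_measurable M" using meas that by simp
    have "(\<integral>\<^sup>+x. ennreal (norm (f i x)) \<partial>M) = (\<integral>\<^sup>+x. ennreal (f i x) \<partial>M)"
      using nn that by (intro nn_integral_cong) simp
    thus "(\<integral>\<^sup>+x. ennreal (norm (f i x)) \<partial>M) < \<infinity>" using ifin that by simp
  qed
  have eq: "(\<integral>\<^sup>+x. ennreal (f i x) \<partial>M) = ennreal (\<integral>x. f i x \<partial>M)" if "i<n" for i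
    using int[OF that] nn that by (intro nn_integral_eq_integral) auto
  have "(\<Sum>i<n. \<integral>\<^sup>+x. ennreal (f i x) \<partial>M) = (\<Sum>i<n. ennreal (\<integral>x. f i x \<partial>M))"
    using eq by simp
  also have "\<dots> = ennreal (\<Sum>i<n. \<integral>x. f i x \<partial>M)"
    using nn by (intro sum_ennreal integral_nonneg) auto
  finally have se: "(\<Sum>i<n. \<integral>\<^sup>+x. ennreal (f i x) \<partial>M) = ennreal (\<Sum>i<n. \<integral>x. f i x \<partial>M)" .
  have S0: "0 \<le> (\<Sum>i<n. \<integral>x. f i x \<partial>M)" using nn by (intro sum_nonneg integral_nonneg) auto
  have npos: "0 < real n" using n by simp
  show "(\<Sum>i<n. \<integral>\<^sup>+x. ennreal (f i x) \<partial>M) / of_nat n = ennreal ((\<Sum>i<n. \<integral>x. f i x \<partial>M) / real n)"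
    unfolding se ennreal_of_nat_eq_real_of_nat by (rule divide_ennreal[OF S0 npos])
qed

lemma resc:
  fixes a l ee nn ss b t :: real
  assumes "nn > 0"
  shows "(a / l + l * ee * (nn * ss) / 2 + 2 * (nn * b) / t) / nn = (a / nn) / l + l * ee * ss / 2 + 2 * b / t"
proof -
  have e1: "(l * ee * (nn * ss) / 2) / nn = l * ee * ss / 2" using assms by simp
  have e2: "(2 * (nn * b) / t) / nn = 2 * b / t" using assms by simp
  have e3: "(a / l) / nn = (a / nn) / l" by simp
  show ?thesis unfolding add_divide_distrib e1 e2 e3 ..
qed

theorem proposition4p4:
  shows "\<exists>C>0. \<forall>(q::real) (n::nat) (p::nat) (\<sigma>::real) (B::real).
     q > 2 \<longrightarrow> n \<ge> 1 \<longrightarrow> p \<ge> 1 \<longrightarrow> \<sigma> > 0 \<longrightarrow> B > 0 \<longrightarrow>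
     (B\<^sup>2 / \<sigma>\<^sup>2) powr (q / (q - 2)) * (ln (2 * real p) / real n) > exp 1 \<longrightarrow>
     Eq q n p \<sigma> B \<le> ennreal (C * B * (ln (2 * real p) / real n) powr (1 - 1 / q)
        * (ln ((B\<^sup>2 / \<sigma>\<^sup>2) * (ln (2 * real p) / real n) powr (1 - 2 / q))) powr (1 / q - 1))"
proof (intro exI[of _ 12] conjI allI impI)
  fix q :: real and n p :: nat and \<sigma> B :: real
  assume q: "q > 2" and n: "n \<ge> 1" and p: "p \<ge> 1" and s: "\<sigma> > 0" and B: "B > 0"
    and H: "(B\<^sup>2 / \<sigma>\<^sup>2) powr (q / (q - 2)) * (ln (2 * real p) / real n) > exp 1"
  define L where "L = ln (2 * real p) / real n"
  have L: "L > 0" using n p by (simp add: L_def)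
  have bs: "B\<^sup>2 / \<sigma>\<^sup>2 > 0" using B s by simp
  have lpos: "ln ((B\<^sup>2 / \<sigma>\<^sup>2) * L powr (1 - 2/q)) > 0"
  proof -
    have X0: "(B\<^sup>2 / \<sigma>\<^sup>2) powr (q / (q - 2)) * L > 0" using L bs by (intro mult_pos_pos) auto
    have "ln (exp 1) < ln ((B\<^sup>2 / \<sigma>\<^sup>2) powr (q / (q - 2)) * L)"
      using H X0 unfolding L_def by (subst ln_less_cancel_iff) auto
    hence "ln ((B\<^sup>2 / \<sigma>\<^sup>2) powr (q / (q - 2)) * L) > 1" by simp
    moreover have "ln ((B\<^sup>2 / \<sigma>\<^sup>2) powr (q / (q - 2)) * L) = ln ((B\<^sup>2 / \<sigma>\<^sup>2) powr (q / (q - 2))) + ln L"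
      using L bs by (intro ln_mult_pos) auto
    moreover have "ln ((B\<^sup>2 / \<sigma>\<^sup>2) powr (q / (q - 2))) = (q / (q - 2)) * ln (B\<^sup>2 / \<sigma>\<^sup>2)"
      by simp
    ultimately have "(q / (q - 2)) * ln (B\<^sup>2 / \<sigma>\<^sup>2) + ln L > 1" by linarith
    hence "((q-2)/q) * ((q / (q - 2)) * ln (B\<^sup>2 / \<sigma>\<^sup>2) + ln L) > ((q-2)/q) * 1"
      using q by (intro mult_strict_left_mono) auto
    moreover have k: "((q-2)/q) * (q/(q-2)) = 1" using q by simp
    moreover have "((q-2)/q) * ((q / (q - 2)) * ln (B\<^sup>2 / \<sigma>\<^sup>2) + ln L) = ((q-2)/q * (q / (q - 2))) * ln (B\<^sup>2 / \<sigma>\<^sup>2) + ((q-2)/q) * ln L"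
      by (simp add: distrib_left)
    ultimately have "ln (B\<^sup>2 / \<sigma>\<^sup>2) + ((q-2)/q) * ln L > (q-2)/q" by simp
    moreover have "(q-2)/q > 0" using q by simp
    moreover have "ln ((B\<^sup>2 / \<sigma>\<^sup>2) * L powr (1 - 2/q)) = ln (B\<^sup>2 / \<sigma>\<^sup>2) + ((q-2)/q) * ln L"
    proof -
      have "ln ((B\<^sup>2 / \<sigma>\<^sup>2) * L powr (1 - 2/q)) = ln (B\<^sup>2 / \<sigma>\<^sup>2) + ln (L powr (1 - 2/q))"
        using L bs by (intro ln_mult_pos) auto
      moreover have "(1 - 2/q) = (q-2)/q" using q by (simp add: field_simps)
      ultimately show ?thesis by simp
    qed
    ultimately show ?thesis by linarith
  qed
  define lg where "lg = ln ((B\<^sup>2 / \<sigma>\<^sup>2) * L powr (1 - 2/q))"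
  define m where "m = max lg 1"
  define \<tau> where "\<tau> = B * L powr (-1/q) * m powr (1/q)"
  define lam where "lam = m / (4*\<tau>)"
  have tau: "\<tau> > 0" using B L by (simp add: \<tau>_def m_def)
  have lam: "lam > 0" using tau by (simp add: lam_def m_def)
  have AR: "L/lam + lam * exp (2*lam*\<tau>) * \<sigma>\<^sup>2 / 2 + 2 * B powr q / \<tau> powr (q-1)
     \<le> 12 * B * L powr (1 - 1/q) * lg powr (1/q - 1)"
    unfolding lam_def \<tau>_def m_def lg_def by (rule arith_final[OF q L B s lpos])
  show "Eq q n p \<sigma> B \<le> ennreal (12 * B * (ln (2 * real p) / real n) powr (1 - 1 / q)
        * (ln ((B\<^sup>2 / \<sigma>\<^sup>2) * (ln (2 * real p) / real n) powr (1 - 2 / q))) powr (1 / q - 1))"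
    unfolding Eq_def
  proof (rule SUP_least)
    fix M assume "M \<in> {M. admissible_law n p M \<and> law_V n p M \<le> ennreal (\<sigma>\<^sup>2) \<and> Dq_le q n p M B}"
    hence adm: "admissible_law n p M" and LV: "law_V n p M \<le> ennreal (\<sigma>\<^sup>2)" and DQ: "Dq_le q n p M B" by auto
    have PS: "prob_space M" using adm by (simp add: admissible_law_def)
    have meas: "\<And>i j. i<n \<Longrightarrow> j<p \<Longrightarrow> (\<lambda>\<omega>. \<omega> i j) \<in> borel_measurable M"
     and int: "\<And>i j. i<n \<Longrightarrow> j<p \<Longrightarrow> integrable M (\<lambda>\<omega>. \<omega> i j)"
     and mean0: "\<And>i j. i<n \<Longrightarrow> j<p \<Longrightarrow> (\<integral>\<omega>. \<omega> i j \<partial>M) = 0"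
     and ind: "prob_space.indep_vars M (\<lambda>_. PiM {..<p} (\<lambda>_. borel)) (\<lambda>i \<omega>. restrict (\<omega> i) {..<p}) {..<n}"
      using adm by (auto simp: admissible_law_def)
    have sq: "(\<forall>i<n. integrable M (\<lambda>\<omega>. (\<omega> i j)\<^sup>2)) \<and> (\<Sum>i<n. \<integral>\<omega>. (\<omega> i j)\<^sup>2 \<partial>M) \<le> real n * \<sigma>\<^sup>2"
      if j: "j<p" for j
    proof -
      have "(\<Sum>i<n. \<integral>\<^sup>+\<omega>. ennreal ((\<omega> i j)\<^sup>2) \<partial>M) / of_nat n \<le> law_V n p M"
        unfolding law_V_def using j by (intro Max_ge) auto
      hence le: "(\<Sum>i<n. \<integral>\<^sup>+\<omega>. ennreal ((\<omega> i j)\<^sup>2) \<partial>M) / of_nat n \<le> ennreal (\<sigma>\<^sup>2)"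
        using LV by (rule order_trans)
      hence fin: "(\<Sum>i<n. \<integral>\<^sup>+\<omega>. ennreal ((\<omega> i j)\<^sup>2) \<partial>M) / of_nat n < \<infinity>"
        using le_less_trans by fastforce
      have m2: "(\<lambda>\<omega>. (\<omega> i j)\<^sup>2) \<in> borel_measurable M" if "i<n" for i
        using meas[OF that j] by measurable
      note R = sum_nn_fin[of n "\<lambda>i \<omega>. (\<omega> i j)\<^sup>2" M, OF n m2 _ fin]
      have "ennreal ((\<Sum>i<n. \<integral>\<omega>. (\<omega> i j)\<^sup>2 \<partial>M) / real n) \<le> ennreal (\<sigma>\<^sup>2)"
        using le R(2) by simp
      hence "(\<Sum>i<n. \<integral>\<omega>. (\<omega> i j)\<^sup>2 \<partial>M) / real n \<le> \<sigma>\<^sup>2"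
        by (simp add: ennreal_le_iff)
      hence "(\<Sum>i<n. \<integral>\<omega>. (\<omega> i j)\<^sup>2 \<partial>M) \<le> real n * \<sigma>\<^sup>2"
        using n by (simp add: field_simps)
      thus ?thesis using R(1) by auto
    qed
    have mq: "(\<lambda>\<omega>. (MAX j\<in>{..<p}. \<bar>\<omega> i j\<bar>) powr q) \<in> borel_measurable M" if "i<n" for i
    proof -
      have [measurable]: "(\<lambda>\<omega>. MAX j\<in>{..<p}. \<bar>\<omega> i j\<bar>) \<in> borel_measurable M"
        using meas that by (intro borel_measurable_Max) auto
      show ?thesis by measurable
    qed
    have Dfin: "law_Dq_pow q n p M < \<infinity>" and Dle: "enn2real (law_Dq_pow q n p M) powr (1/q) \<le> B"
      using DQ by (auto simp: Dq_le_def)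
    define S where "S = (\<Sum>i<n. \<integral>\<omega>. (MAX j\<in>{..<p}. \<bar>\<omega> i j\<bar>) powr q \<partial>M)"
    have S0: "S \<ge> 0" unfolding S_def by (intro sum_nonneg integral_nonneg) auto
    have R2i: "integrable M (\<lambda>\<omega>. (MAX j\<in>{..<p}. \<bar>\<omega> i j\<bar>) powr q)" if "i<n" for i
      using sum_nn_fin(1)[of n "\<lambda>i \<omega>. (MAX j\<in>{..<p}. \<bar>\<omega> i j\<bar>) powr q" M i] n mq Dfin that
      by (simp add: law_Dq_pow_def)
    have R2e: "law_Dq_pow q n p M = ennreal (S / real n)"
      using sum_nn_fin(2)[of n "\<lambda>i \<omega>. (MAX j\<in>{..<p}. \<bar>\<omega> i j\<bar>) powr q" M] n mq Dfin
      by (simp add: law_Dq_pow_def S_def)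
    have "enn2real (law_Dq_pow q n p M) = S / real n"
      unfolding R2e using S0 by simp
    hence "(S / real n) powr (1/q) \<le> B" using Dle by simp
    hence "((S / real n) powr (1/q)) powr q \<le> B powr q"
      using q by (intro powr_mono2) auto
    hence "S / real n \<le> B powr q" using q S0 by (simp add: powr_powr powr_one)
    hence Db: "S \<le> real n * B powr q" using n by (simp add: field_simps)
    have "max_mean_dev n p M \<le> ennreal ((ln (2*real p)/lam + lam * exp (2*lam*\<tau>) * (real n * \<sigma>\<^sup>2) / 2 + 2 * (real n * B powr q) / \<tau> powr (q-1)) / real n)"
    proof -
      have q1: "q \<ge> 1" using q by simp
      have sqi: "\<And>i j. i<n \<Longrightarrow> j<p \<Longrightarrow> integrable M (\<lambda>\<omega>. (\<omega> i j)\<^sup>2)" using sq by blast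
      have sqV: "\<And>j. j<p \<Longrightarrow> (\<Sum>i<n. \<integral>\<omega>. (\<omega> i j)\<^sup>2 \<partial>M) \<le> real n * \<sigma>\<^sup>2" using sq by blast
      have Db': "(\<Sum>i<n. \<integral>\<omega>. (MAX j\<in>{..<p}. \<bar>\<omega> i j\<bar>) powr q \<partial>M) \<le> real n * B powr q"
        using Db unfolding S_def .
      show ?thesis unfolding max_mean_dev_def
        by (rule core[OF PS n p q1 tau lam meas int mean0 ind sqi sqV R2i Db'])
    qed
    also have "\<dots> = ennreal (L/lam + lam * exp (2*lam*\<tau>) * \<sigma>\<^sup>2 / 2 + 2 * B powr q / \<tau> powr (q-1))"
    proof -
      have npos: "real n > 0" using n by simp
      show ?thesis unfolding L_def by (simp only: resc[OF npos])
    qed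
    also have "\<dots> \<le> ennreal (12 * B * L powr (1 - 1/q) * lg powr (1/q - 1))"
      using AR by (rule ennreal_leI)
    finally show "max_mean_dev n p M \<le> ennreal (12 * B * (ln (2 * real p) / real n) powr (1 - 1 / q)
        * (ln ((B\<^sup>2 / \<sigma>\<^sup>2) * (ln (2 * real p) / real n) powr (1 - 2 / q))) powr (1 / q - 1))"
      unfolding L_def lg_def .
  qed
qed simp

end
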